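(* Let $K, M, N, d$ be positive integers, $\sigma^2>0$, $P>0$, weights $\omega_1,\ldots,\omega_K>0$, and channel matrices $\boldsymbol{H}_k\in\mathbb{C}^{N\times M}$. For $\boldsymbol{V}=(\boldsymbol{V}_1,\ldots,\boldsymbol{V}_K)$, $\boldsymbol{V}_k\in\mathbb{C}^{M\times d}$, define $$f(\boldsymbol{V})=\sum_{k=1}^K\omega_k\log\left|\boldsymbol{I}+\boldsymbol{V}_k^{\mathrm{H}}\boldsymbol{H}_k^{\mathrm{H}}\boldsymbol{F}_k^{-1}\boldsymbol{H}_k\boldsymbol{V}_k\right|,\quad \boldsymbol{F}_k=\sigma^2\boldsymbol{I}+\sum_{j\ne k}\boldsymbol{H}_k\boldsymbol{V}_j\boldsymbol{V}_j^{\mathrm{H}}\boldsymbol{H}_k^{\mathrm{H}},$$ and, for $\sum_k\|\boldsymbol{V}_k\|_F^2>0$, $$g(\boldsymbol{V})=\sum_{k=1}^K\omega_k\log\left|\boldsymbol{I}+\boldsymbol{V}_k^{\mathrm{H}}\boldsymbol{H}_k^{\mathrm{H}}\widetilde{\boldsymbol{F}}_k^{-1}\boldsymbol{H}_k\boldsymbol{V}_k\right|,\quad \widetilde{\boldsymbol{F}}_k=\Big(\frac{\sigma^2}{P}\sum_{j=1}^K\|\boldsymbol{V}_j\|_F^2\Big)\boldsymbol{I}+\sum_{j\ne k}\boldsymbol{H}_k\boldsymbol{V}_j\boldsymbol{V}_j^{\mathrm{H}}\boldsymbol{H}_k^{\mathrm{H}}.$$ Consider the unconstrained problem $\max_{\boldsymbol{V}}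 g(\boldsymbol{V})$ and the constrained problem $\max_{\boldsymbol{V}} f(\boldsymbol{V})$ subject to $\sum_{k=1}^K\|\boldsymbol{V}_k\|_F^2\le P$. Then for any $\boldsymbol{V}$ with $\sum_{k=1}^K\|\boldsymbol{V}_k\|_F^2>0$, $\boldsymbol{V}$ is a stationary point of the unconstrained problem if and only if $\rho\boldsymbol{V}$ is a stationary point of the constrained problem, where $\rho=\big(P/\sum_{k=1}^K\|\boldsymbol{V}_k\|_F^2\big)^{1/2}$.
   Context: $|\cdot|$ denotes determinant, $\|\cdot\|_F$ Frobenius norm. A stationary point of the unconstrained problem is a point where $\nabla g=\boldsymbol{0}$; a stationary point of the constrained problem is a feasible point satisfying the KKT conditions. Gradients are with respect to the complex matrices viewed as real variables. *)

theory Defs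
  imports "HOL-Analysis.Analysis"
begin

definition hadj :: "complex^'n^'m \<Rightarrow> complex^'m^'n" where
  "hadj A = (\<chi> i j. cnj (A $ j $ i))"

definition frob_sq :: "complex^'n^'m \<Rightarrow> real" where
  "frob_sq A = (\<Sum>i\<in>UNIV. \<Sum>j\<in>UNIV. (cmod (A $ i $ j))^2)"

definition total_power :: "complex^'d^'m^'k \<Rightarrow> real" where
  "total_power V = (\<Sum>k\<in>UNIV. frob_sq (V $ k))"

definition Fmat :: "('k \<Rightarrow> complex^'m^'n) \<Rightarrow> complex^'d^'m^'k \<Rightarrow> real \<Rightarrow> 'k \<Rightarrow> complex^'n^'n" where
  "Fmat H V s k = mat (complex_of_real s) +
     (\<Sum>j\<in>UNIV - {k}. H k ** V $ j ** hadj (V $ j) ** hadj (H k))"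

text \<open>log | I + V_k^H H_k^H F^{-1} H_k V_k | (natural log; the determinant is real positive,
  we take its real part).\<close>
definition rate :: "('k \<Rightarrow> complex^'m^'n) \<Rightarrow> complex^'d^'m^'k \<Rightarrow> real \<Rightarrow> 'k \<Rightarrow> real" where
  "rate H V s k = ln (Re (det (mat 1 + hadj (V $ k) ** hadj (H k) **
       matrix_inv (Fmat H V s k) ** H k ** V $ k)))"

definition f_obj :: "('k \<Rightarrow> real) \<Rightarrow> ('k \<Rightarrow> complex^'m^'n) \<Rightarrow> real \<Rightarrow> complex^'d^'m^'k \<Rightarrow> real" where
  "f_obj \<omega> H \<sigma>2 V = (\<Sum>k\<in>UNIV. \<omega> k * rate H V \<sigma>2 k)"

definition g_obj :: "('k \<Rightarrow> real) \<Rightarrow> ('k \<Rightarrow> complex^'m^'n) \<Rightarrow> real \<Rightarrow> real \<Rightarrow> complex^'d^'m^'k \<Rightarrow> real" where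
  "g_obj \<omega> H \<sigma>2 P V = (\<Sum>k\<in>UNIV. \<omega> k * rate H V (\<sigma>2 / P * total_power V) k)"

definition stationary_point :: "('a::real_normed_vector \<Rightarrow> real) \<Rightarrow> 'a \<Rightarrow> bool" where
  "stationary_point g x \<longleftrightarrow> (g has_derivative (\<lambda>h. 0)) (at x)"

definition kkt_point :: "('a::real_normed_vector \<Rightarrow> real) \<Rightarrow> ('a \<Rightarrow> real) \<Rightarrow> 'a \<Rightarrow> bool" where
  "kkt_point f c x \<longleftrightarrow> c x \<le> 0 \<and>
     (\<exists>\<mu> Df Dc. \<mu> \<ge> 0 \<and> (f has_derivative Df) (at x) \<and> (c has_derivative Dc) (at x) \<and>
        (\<forall>h. Df h - \<mu> * Dc h = 0) \<and> \<mu> * c x = 0)"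

end

theory Submission
  imports Defs "HOL-Computational_Algebra.Fundamental_Theorem_Algebra"
begin


definition vn :: "complex^'n \<Rightarrow> real" where "vn x = (\<Sum>i\<in>UNIV. (cmod (x$i))^2)"
definition hq :: "complex^'n^'n \<Rightarrow> complex^'n \<Rightarrow> complex" where
  "hq M x = (\<Sum>i\<in>UNIV. cnj (x$i) * (M *v x)$i)"
definition psd :: "complex^'n^'n \<Rightarrow> bool" where
  "psd M \<longleftrightarrow> (\<forall>x. Im (hq M x) = 0 \<and> 0 \<le> Re (hq M x))"
definition pd :: "complex^'n^'n \<Rightarrow> bool" where
  "pd M \<longleftrightarrow> (\<forall>x. x \<noteq> 0 \<longrightarrow> Im (hq M x) = 0 \<and> 0 < Re (hq M x))"

lemma vn_pos: "x \<noteq> 0 \<Longrightarrow> 0 < vn x"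
proof -
  assume "x \<noteq> 0"
  then obtain i where "x$i \<noteq> 0" by (metis vec_eq_iff zero_index)
  then show ?thesis unfolding vn_def
    by (intro sum_pos2[of _ i]) auto
qed

lemma cnj_mult_self: "cnj z * z = complex_of_real ((cmod z)^2)"
  by (metis complex_mod_mult_cnj complex_norm_square mult.commute)

lemma cscale: "r *\<^sub>R (z::complex) = complex_of_real r * z"
  by (simp add: scaleR_conv_of_real)

lemma hq_vn: "(\<Sum>i\<in>UNIV. cnj (x$i) * x$i) = complex_of_real (vn x)"
  by (simp add: vn_def cnj_mult_self)

lemma mat_mult_vec: "mat c *v x = (\<chi> i. c * x$i)"
  by (simp add: matrix_vector_mult_def mat_def vec_eq_iff if_distrib if_distribR sum.delta cong: if_cong)

lemma hq_mat: "hq (mat c) x = c * complex_of_real (vn x)"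
proof -
  have "hq (mat c) x = (\<Sum>i\<in>UNIV. c * (cnj (x$i) * x$i))"
    by (simp add: hq_def mat_mult_vec mult_ac)
  also have "\<dots> = c * complex_of_real (vn x)" by (simp add: sum_distrib_left[symmetric] hq_vn)
  finally show ?thesis .
qed

lemma hq_add: "hq (A + B) x = hq A x + hq B x"
  by (simp add: hq_def matrix_vector_mult_add_rdistrib distrib_left sum.distrib)

lemma hq_zero: "hq 0 x = 0"
  by (simp add: hq_def)

lemma hq_sum: "hq (sum f S) x = (\<Sum>j\<in>S. hq (f j) x)"
  by (induction S rule: infinite_finite_induct) (auto simp: hq_zero hq_add)

lemma hq_scaleR: "hq (c *\<^sub>R A) x = complex_of_real c * hq A x"
proof -
  have "(c *\<^sub>R A) *v x = (\<chi> i. complex_of_real c * (A *v x)$i)"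
    by (simp add: matrix_vector_mult_def vec_eq_iff cscale sum_distrib_left mult_ac)
  then show ?thesis by (simp add: hq_def sum_distrib_left mult_ac)
qed

lemma hadj_hadj[simp]: "hadj (hadj A) = A"
  by (simp add: hadj_def vec_eq_iff)

lemma hadj_mult: "hadj (A ** B) = hadj B ** hadj A"
  by (simp add: hadj_def matrix_matrix_mult_def vec_eq_iff mult.commute)

lemma hadj_add: "hadj (A + B) = hadj A + hadj B"
  by (simp add: hadj_def vec_eq_iff)

lemma hadj_zero: "hadj 0 = 0"
  by (simp add: hadj_def vec_eq_iff)

lemma hadj_sum: "hadj (sum f S) = (\<Sum>j\<in>S. hadj (f j))"
  by (induction S rule: infinite_finite_induct) (auto simp: hadj_zero hadj_add)

lemma hadj_scaleR: "hadj (c *\<^sub>R A) = c *\<^sub>R hadj A"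
  by (simp add: hadj_def vec_eq_iff cscale)

lemma hadj_mat: "hadj (mat c) = mat (cnj c)"
  by (simp add: hadj_def vec_eq_iff mat_def)

lemma adj_move:
  fixes M :: "complex^'a^'b"
  shows "(\<Sum>i\<in>UNIV. cnj (x$i) * (M *v y)$i) = (\<Sum>j\<in>UNIV. cnj ((hadj M *v x)$j) * y$j)"
proof -
  have "(\<Sum>i\<in>UNIV. cnj (x$i) * (M *v y)$i) = (\<Sum>i\<in>UNIV. \<Sum>j\<in>UNIV. cnj (x$i) * M$i$j * y$j)"
    by (simp add: matrix_vector_mult_def sum_distrib_left mult_ac)
  also have "\<dots> = (\<Sum>j\<in>UNIV. \<Sum>i\<in>UNIV. cnj (x$i) * M$i$j * y$j)"
    by (rule sum.swap)
  also have "\<dots> = (\<Sum>j\<in>UNIV. cnj ((hadj M *v x)$j) * y$j)"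
    by (simp add: matrix_vector_mult_def hadj_def sum_distrib_right sum_distrib_left mult_ac)
  finally show ?thesis .
qed

lemma hq_sandwich:
  fixes Z :: "complex^'a^'b" and M :: "complex^'b^'b"
  shows "hq (hadj Z ** M ** Z) x = hq M (Z *v x)"
proof -
  have "(hadj Z ** M ** Z) *v x = hadj Z *v (M *v (Z *v x))"
    by (simp add: matrix_vector_mul_assoc matrix_mul_assoc)
  then have "hq (hadj Z ** M ** Z) x = (\<Sum>i\<in>UNIV. cnj (x$i) * (hadj Z *v (M *v (Z *v x)))$i)"
    by (simp add: hq_def)
  also have "\<dots> = hq M (Z *v x)"
    by (subst adj_move) (simp add: hq_def)
  finally show ?thesis .
qed

lemma psd_add: "psd A \<Longrightarrow> psd B \<Longrightarrow> psd (A + B)"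
  by (simp add: psd_def hq_add)

lemma pd_add_psd: "pd A \<Longrightarrow> psd B \<Longrightarrow> pd (A + B)"
  by (simp add: pd_def psd_def hq_add add_pos_nonneg)

lemma psd_zero: "psd 0"
  by (simp add: psd_def hq_zero)

lemma psd_sum: "(\<And>j. j \<in> S \<Longrightarrow> psd (f j)) \<Longrightarrow> psd (sum f S)"
  by (induction S rule: infinite_finite_induct) (auto simp: psd_zero psd_add)

lemma psd_scaleR: "psd A \<Longrightarrow> 0 \<le> c \<Longrightarrow> psd (c *\<^sub>R A)"
  by (simp add: psd_def hq_scaleR)

lemma pd_mat: "0 < s \<Longrightarrow> pd (mat (complex_of_real s))"
  by (simp add: pd_def hq_mat vn_pos)

lemma pd_psd: "pd A \<Longrightarrow> psd A"
proof -
  assume a: "pd A"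
  have "hq A 0 = 0" by (simp add: hq_def)
  then show ?thesis using a unfolding pd_def psd_def by (metis less_le order_refl zero_complex.sel)
qed

lemma psd_sandwich: "psd M \<Longrightarrow> psd (hadj Z ** M ** Z)"
  by (simp add: psd_def hq_sandwich)

lemma psd_gram: "psd (G ** hadj G)"
proof -
  have "psd (hadj (hadj G) ** mat 1 ** hadj G)"
    by (rule psd_sandwich) (use pd_psd pd_mat[of 1] in simp)
  then show ?thesis by simp
qed

lemma pd_inj: "pd M \<Longrightarrow> inj ((*v) M)"
proof (rule injI)
  fix x y assume pd: "pd M" and e: "M *v x = M *v y"
  have "M *v (x - y) = 0" using e by (simp add: matrix_vector_mult_diff_distrib)
  then have "hq M (x - y) = 0" by (simp add: hq_def)
  then show "x = y" using pd unfolding pd_def by (metis eq_iff_diff_eq_0 less_irrefl zero_complex.simps(1))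
qed

lemma pd_det: "pd M \<Longrightarrow> det M \<noteq> 0"
  using det_nz_iff_inj_gen[OF matrix_vector_mul_linear_gen, of M] pd_inj by simp

lemma pd_invertible: "pd M \<Longrightarrow> invertible M"
  by (simp add: invertible_det_nz pd_det)

lemma matrix_inv_works:
  assumes "invertible A"
  shows "A ** matrix_inv A = mat 1" "matrix_inv A ** A = mat 1"
proof -
  have "\<exists>A'. A ** A' = mat 1 \<and> A' ** A = mat 1" using assms by (simp add: invertible_def)
  then have "A ** matrix_inv A = mat 1 \<and> matrix_inv A ** A = mat 1"
    unfolding matrix_inv_def by (rule someI_ex)
  then show "A ** matrix_inv A = mat 1" "matrix_inv A ** A = mat 1" by auto
qed

lemma pd_inv: assumes "pd M" shows "pd (matrix_inv M)"
  unfolding pd_def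
proof (intro allI impI)
  fix y :: "complex^'a" assume y: "y \<noteq> 0"
  have inv: "invertible M" using assms pd_invertible by blast
  define z where "z = matrix_inv M *v y"
  have Mz: "M *v z = y" using matrix_inv_works[OF inv]
    by (simp add: z_def matrix_vector_mul_assoc)
  have "z \<noteq> 0" using Mz y by auto
  then have q: "Im (hq M z) = 0" "0 < Re (hq M z)" using assms unfolding pd_def by auto
  have "hq (matrix_inv M) y = (\<Sum>i\<in>UNIV. cnj (y$i) * z$i)" by (simp add: hq_def z_def)
  also have "\<dots> = cnj (hq M z)" by (simp add: hq_def Mz mult.commute)
  also have "\<dots> = hq M z" using q by (simp add: complex_eq_iff)
  finally show "Im (hq (matrix_inv M) y) = 0 \<and> 0 < Re (hq (matrix_inv M) y)" using q by simp
qed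



lemma poly_det: "poly (det (M :: 'a::comm_ring_1 poly^'n^'n)) z = det (\<chi> i j. poly (M$i$j) z)"
  unfolding det_def by (simp add: poly_sum poly_prod)

lemma poly_ratio:
  fixes p :: "complex poly"
  assumes p0: "p \<noteq> 0" and roots: "\<forall>z. poly p z = 0 \<longrightarrow> Im z = 0 \<and> Re z < 0"
  shows "\<exists>r\<ge>1. poly p 1 = complex_of_real r * poly p 0"
proof -
  obtain root where p: "smult (lead_coeff p) (\<Prod>i<degree p. [:-root i, 1:]) = p"
    using complex_poly_decompose' by blast
  have pz: "poly p z = lead_coeff p * (\<Prod>i<degree p. z - root i)" for z
    by (subst p[symmetric]) (simp add: poly_prod)
  have rt: "Im (root i) = 0 \<and> Re (root i) < 0" if "i < degree p" for i
  proof -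
    have "poly p (root i) = 0" unfolding pz using that
      by (auto intro!: prod_zero)
    then show ?thesis using roots by blast
  qed
  define r where "r = (\<Prod>i<degree p. (1 - Re (root i)) / (- Re (root i)))"
  have "r \<ge> 1" unfolding r_def
    by (rule prod_ge_1) (use rt in \<open>auto simp: field_simps\<close>)
  moreover have "poly p 1 = complex_of_real r * poly p 0"
  proof -
    have fac: "complex_of_real ((1 - Re (root i)) / (- Re (root i))) * (0 - root i) = 1 - root i"
      if "i < degree p" for i
    proof -
      define a where "a = Re (root i)"
      have ri: "root i = complex_of_real a" using rt[OF that] by (simp add: complex_eq_iff a_def)
      have an: "a < 0" using rt[OF that] by (simp add: a_def)
      have "(1 - a) / (- a) * (- a) = 1 - a" using an by simp
      then have "complex_of_real ((1 - a) / (- a)) * complex_of_real (- a) = complex_of_real (1 - a)"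
        by (metis of_real_mult)
      then show ?thesis unfolding ri a_def[symmetric] by simp
    qed
    have cr: "complex_of_real r = (\<Prod>i<degree p. complex_of_real ((1 - Re (root i)) / (- Re (root i))))"
      by (simp only: r_def of_real_prod)
    have "complex_of_real r * poly p 0 = (\<Prod>i<degree p. complex_of_real ((1 - Re (root i)) / (- Re (root i)))) * (lead_coeff p * (\<Prod>i<degree p. 0 - root i))"
      by (simp only: cr pz)
    also have "\<dots> = lead_coeff p * ((\<Prod>i<degree p. complex_of_real ((1 - Re (root i)) / (- Re (root i)))) * (\<Prod>i<degree p. 0 - root i))"
      by (simp only: ac_simps)
    also have "\<dots> = lead_coeff p * (\<Prod>i<degree p. complex_of_real ((1 - Re (root i)) / (- Re (root i))) * (0 - root i))"
      by (simp only: prod.distrib)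
    also have "\<dots> = lead_coeff p * (\<Prod>i<degree p. 1 - root i)"
    proof -
      have "(\<Prod>i<degree p. complex_of_real ((1 - Re (root i)) / (- Re (root i))) * (0 - root i)) = (\<Prod>i<degree p. 1 - root i)"
        by (rule prod.cong[OF refl]) (rule fac, simp)
      then show ?thesis by (simp only:)
    qed
    finally show ?thesis by (simp only: pz)
  qed
  ultimately show ?thesis by blast
qed

lemma mv_lin: "((\<chi> i j. A$i$j + z * Y$i$j) *v w) $ i = (A *v w)$i + z * (Y *v w)$i"
  by (simp add: matrix_vector_mult_def sum.distrib sum_distrib_left algebra_simps)

lemma hq_lin: "hq (\<chi> i j. A$i$j + z * Y$i$j) w = hq A w + z * hq Y w"
  by (simp add: hq_def mv_lin sum.distrib sum_distrib_left algebra_simps)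

lemma det_mono:
  fixes A Y :: "complex^'n^'n"
  assumes A: "pd A" and Y: "psd Y"
  shows "\<exists>r\<ge>1. det (A + Y) = complex_of_real r * det A"
proof -
  define M where "M = (\<chi> i j. [:A$i$j, Y$i$j:])"
  define p where "p = det M"
  have pp: "poly p z = det (\<chi> i j. A$i$j + z * Y$i$j)" for z
    by (simp add: p_def M_def poly_det)
  have "(\<chi> i j. A$i$j + 0 * Y$i$j) = A" by (simp add: vec_eq_iff)
  then have p0: "poly p 0 = det A" unfolding pp by simp
  have "(\<chi> i j. A$i$j + 1 * Y$i$j) = A + Y" by (simp add: vec_eq_iff)
  then have p1: "poly p 1 = det (A + Y)" unfolding pp by simp
  have "p \<noteq> 0" using p0 pd_det[OF A] by auto
  moreover have "\<forall>z. poly p z = 0 \<longrightarrow> Im z = 0 \<and> Re z < 0"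
  proof (intro allI impI)
    fix z assume "poly p z = 0"
    then have "\<not> inj ((*v) (\<chi> i j. A$i$j + z * Y$i$j))"
      using det_nz_iff_inj_gen[OF matrix_vector_mul_linear_gen, of "(\<chi> i j. A$i$j + z * Y$i$j)"]
      by (simp add: pp)
    then obtain u v where uv: "u \<noteq> v" "(\<chi> i j. A$i$j + z * Y$i$j) *v u = (\<chi> i j. A$i$j + z * Y$i$j) *v v"
      unfolding inj_def by blast
    define w where "w = u - v"
    have w0: "w \<noteq> 0" using uv by (simp add: w_def)
    have "(\<chi> i j. A$i$j + z * Y$i$j) *v w = 0" using uv
      by (simp add: w_def matrix_vector_mult_diff_distrib)
    then have "hq (\<chi> i j. A$i$j + z * Y$i$j) w = 0" by (simp add: hq_def)
    then have e: "hq A w + z * hq Y w = 0" by (simp add: hq_lin)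
    obtain \<alpha> where a: "hq A w = complex_of_real \<alpha>" "\<alpha> > 0"
      using A w0 unfolding pd_def by (metis complex_is_Real_iff of_real_Re)
    obtain \<beta> where b: "hq Y w = complex_of_real \<beta>" "\<beta> \<ge> 0"
      using Y unfolding psd_def by (metis complex_is_Real_iff of_real_Re)
    have "\<beta> \<noteq> 0" using e a b by auto
    then have "z = complex_of_real (- \<alpha> / \<beta>)" using e a b
      by (simp add: field_simps add_eq_0_iff)
    then show "Im z = 0 \<and> Re z < 0" using a b \<open>\<beta> \<noteq> 0\<close>
      by (simp add: divide_pos_pos)
  qed
  ultimately show ?thesis using poly_ratio p0 p1 by metis
qed



lemma matrix_add_rdistrib: "(A + B) ** C = A ** C + B ** (C :: 'a::semiring_1^'n^'m)"
  by (simp add: matrix_matrix_mult_def vec_eq_iff distrib_right sum.distrib)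

lemma matrix_inv_unique:
  assumes "A ** B = mat 1" "B ** A = mat 1"
  shows "matrix_inv A = B"
proof -
  have inv: "invertible A" using assms unfolding invertible_def by blast
  note w = matrix_inv_works[OF inv]
  have "matrix_inv A = matrix_inv A ** (A ** B)" by (simp add: assms)
  also have "\<dots> = (matrix_inv A ** A) ** B" by (simp add: matrix_mul_assoc)
  also have "\<dots> = B" by (simp add: w)
  finally show ?thesis .
qed

lemma matrix_inv_scaleR:
  fixes A :: "complex^'n^'n"
  assumes "invertible A" "c \<noteq> 0"
  shows "matrix_inv (c *\<^sub>R A) = (1/c) *\<^sub>R matrix_inv A"
  using matrix_inv_works[OF assms(1)] assms(2)
  by (intro matrix_inv_unique) (simp_all add: matrix_scalar_ac scalar_matrix_assoc[symmetric])

lemma term_gram: "H ** W ** hadj W ** hadj H = (H ** W) ** hadj (H ** W)"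
  by (simp add: hadj_mult matrix_mul_assoc)

lemma psd_Q: "psd (\<Sum>j\<in>S. H k ** V $ j ** hadj (V $ j) ** hadj (H k))"
  by (rule psd_sum) (simp add: term_gram psd_gram)

lemma pd_F: "0 < s \<Longrightarrow> pd (Fmat H V s k)"
  unfolding Fmat_def by (intro pd_add_psd pd_mat psd_Q)

lemma hadj_F: "hadj (Fmat H V s k) = Fmat H V s k"
  unfolding Fmat_def
  by (simp add: hadj_add hadj_sum hadj_mat hadj_mult matrix_mul_assoc)

lemma X_form: "hadj (V $ k) ** hadj (H k) ** M ** H k ** V $ k = hadj (H k ** V $ k) ** M ** (H k ** V $ k)"
  by (simp add: hadj_mult matrix_mul_assoc)

lemma det_rate:
  assumes "0 < s"
  shows "\<exists>r\<ge>1. det (mat 1 + hadj (V $ k) ** hadj (H k) ** matrix_inv (Fmat H V s k) ** H k ** V $ k) = complex_of_real r"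
proof -
  have "psd (hadj (H k ** V $ k) ** matrix_inv (Fmat H V s k) ** (H k ** V $ k))"
    by (intro psd_sandwich pd_psd pd_inv pd_F assms)
  from det_mono[OF pd_mat[of 1] this] show ?thesis by (simp add: X_form)
qed

lemma inv_diff:
  fixes F2 :: "complex^'n^'n"
  assumes pd: "pd F2" and h: "hadj F2 = F2" and d: "0 \<le> d"
  defines "F1 \<equiv> F2 + mat (complex_of_real d)"
  shows "matrix_inv F2 = matrix_inv F1 + d *\<^sub>R (matrix_inv F2 ** matrix_inv F1)"
    and "psd (matrix_inv F2 ** matrix_inv F1)"
proof -
  have pd1: "pd F1" unfolding F1_def
    by (rule pd_add_psd[OF pd]) (use d in \<open>simp add: psd_def hq_mat vn_def sum_nonneg\<close>)
  note w1 = matrix_inv_works[OF pd_invertible[OF pd1]]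
  note w2 = matrix_inv_works[OF pd_invertible[OF pd]]
  have md: "mat (complex_of_real d) = d *\<^sub>R (mat 1 :: complex^'n^'n)"
    by (simp add: vec_eq_iff mat_def cscale)
  have "matrix_inv F2 = matrix_inv F2 ** (F1 ** matrix_inv F1)" by (simp add: w1)
  also have "\<dots> = (matrix_inv F2 ** F2) ** matrix_inv F1 + matrix_inv F2 ** mat (complex_of_real d) ** matrix_inv F1"
    by (simp add: F1_def matrix_add_ldistrib matrix_add_rdistrib matrix_mul_assoc)
  also have "\<dots> = matrix_inv F1 + d *\<^sub>R (matrix_inv F2 ** matrix_inv F1)"
    by (simp add: w2 md matrix_scalar_ac scalar_matrix_assoc[symmetric])
  finally show "matrix_inv F2 = matrix_inv F1 + d *\<^sub>R (matrix_inv F2 ** matrix_inv F1)" .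
  show "psd (matrix_inv F2 ** matrix_inv F1)"
    unfolding psd_def
  proof
    fix y :: "complex^'n"
    define z where "z = (matrix_inv F2 ** matrix_inv F1) *v y"
    define w where "w = F2 *v z"
    have y: "y = F1 *v w"
      by (simp add: w_def z_def matrix_vector_mul_assoc matrix_mul_assoc w1 w2)
    have F1w: "F1 *v w = F2 *v w + complex_of_real d *s w"
      by (simp add: F1_def matrix_vector_mult_add_rdistrib mat_mult_vec vec_eq_iff)
    have e1: "(\<Sum>i\<in>UNIV. cnj (z$i) * (F2 *v w)$i) = complex_of_real (vn w)"
      by (subst adj_move) (simp add: h w_def hq_vn)
    have e2: "(\<Sum>i\<in>UNIV. cnj (z$i) * (complex_of_real d *s w)$i) = complex_of_real d * hq F2 z"
    proof -
      have "(\<Sum>i\<in>UNIV. cnj (z$i) * (complex_of_real d *s w)$i) = complex_of_real d * (\<Sum>i\<in>UNIV. cnj (z$i) * w$i)"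
        by (simp add: sum_distrib_left mult_ac)
      also have "(\<Sum>i\<in>UNIV. cnj (z$i) * w$i) = hq F2 z"
        by (simp add: hq_def w_def)
      finally show ?thesis .
    qed
    have qz: "Im (hq F2 z) = 0 \<and> 0 \<le> Re (hq F2 z)" using pd_psd[OF pd] unfolding psd_def by blast
    have "hq (matrix_inv F2 ** matrix_inv F1) y = cnj (\<Sum>i\<in>UNIV. cnj (z$i) * y$i)"
      by (simp add: hq_def z_def[symmetric] mult.commute)
    also have "\<dots> = cnj (complex_of_real (vn w) + complex_of_real d * hq F2 z)"
      by (simp add: y F1w e1[symmetric] e2[symmetric] distrib_left sum.distrib)
    finally have "hq (matrix_inv F2 ** matrix_inv F1) y = cnj (complex_of_real (vn w) + complex_of_real d * hq F2 z)" .
    then show "Im (hq (matrix_inv F2 ** matrix_inv F1) y) = 0 \<and> 0 \<le> Re (hq (matrix_inv F2 ** matrix_inv F1) y)"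
      using qz d by (simp add: vn_def sum_nonneg)
  qed
qed



lemma mat_add: "mat a + mat b = (mat (a + b) :: 'a::semiring_1^'n^'n)"
  by (simp add: vec_eq_iff mat_def)

lemma rate_alt: "rate H V s k = ln (Re (det (mat 1 + hadj (H k ** V$k) ** matrix_inv (Fmat H V s k) ** (H k ** V$k))))"
  by (simp add: rate_def X_form)

lemma rate_mono:
  assumes s2: "0 < s2" and le: "s2 \<le> s1"
  shows "rate H V s1 k \<le> rate H V s2 k"
proof -
  define B where "B = H k ** V$k"
  define F2 where "F2 = Fmat H V s2 k"
  define d where "d = s1 - s2"
  have d: "0 \<le> d" using le by (simp add: d_def)
  have F1: "Fmat H V s1 k = F2 + mat (complex_of_real d)"
    by (simp add: F2_def Fmat_def d_def add_ac mat_add)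
  have pdF2: "pd F2" using pd_F s2 by (simp add: F2_def)
  have hF2: "hadj F2 = F2" by (simp add: F2_def hadj_F)
  note idf = inv_diff[OF pdF2 hF2 d, folded F1]
  define N where "N = matrix_inv F2 ** matrix_inv (Fmat H V s1 k)"
  define X1 where "X1 = hadj B ** matrix_inv (Fmat H V s1 k) ** B"
  have eq: "mat 1 + hadj B ** matrix_inv F2 ** B = (mat 1 + X1) + d *\<^sub>R (hadj B ** N ** B)"
    by (subst idf(1)) (simp add: X1_def N_def matrix_add_ldistrib matrix_add_rdistrib matrix_scalar_ac scalar_matrix_assoc[symmetric] add_ac)
  have psdN: "psd N" using idf(2) by (simp add: N_def)
  have pdX1: "pd (mat 1 + X1)" unfolding X1_def
    by (intro pd_add_psd pd_mat[of 1, simplified] psd_sandwich pd_psd pd_inv pd_F) (use s2 le in simp)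
  obtain r where r: "r \<ge> 1" "det ((mat 1 + X1) + d *\<^sub>R (hadj B ** N ** B)) = complex_of_real r * det (mat 1 + X1)"
    using det_mono[OF pdX1 psd_scaleR[OF psd_sandwich[OF psdN] d]] by blast
  obtain r1 where r1: "r1 \<ge> 1" "det (mat 1 + X1) = complex_of_real r1"
    using det_rate[of s1 V k H] s2 le by (auto simp: X1_def B_def X_form)
  have "rate H V s1 k = ln r1" by (simp add: rate_alt r1 X1_def[unfolded B_def, symmetric])
  moreover have "rate H V s2 k = ln (r * r1)"
    by (simp add: rate_alt F2_def[symmetric] B_def[symmetric] eq r r1)
  moreover have "ln r1 \<le> ln (r * r1)" using r r1
    by (subst ln_le_cancel_iff) (auto intro: mult_right_mono[of 1 r r1, simplified])
  ultimately show ?thesis by simp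
qed

lemma F_scale:
  assumes "a \<noteq> 0"
  shows "Fmat H (a *\<^sub>R V) s k = (a^2) *\<^sub>R Fmat H V (s / a^2) k"
proof -
  have m: "mat (complex_of_real s) = (a^2) *\<^sub>R (mat (complex_of_real (s / a^2)) :: complex^'n^'n)"
    using assms by (simp add: vec_eq_iff mat_def cscale)
  have t: "H k ** (a *\<^sub>R V $ j) ** hadj (a *\<^sub>R V $ j) ** hadj (H k) = (a^2) *\<^sub>R (H k ** V $ j ** hadj (V $ j) ** hadj (H k))" for j
    by (simp add: hadj_scaleR matrix_scalar_ac scalar_matrix_assoc[symmetric] power2_eq_square)
  show ?thesis unfolding Fmat_def
    by (simp add: scaleR_add_right scaleR_sum_right m t)
qed

lemma rate_scale:
  assumes a: "a \<noteq> 0" and s: "0 < s"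
  shows "rate H (a *\<^sub>R V) s k = rate H V (s / a^2) k"
proof -
  have inv: "invertible (Fmat H V (s / a^2) k)"
    by (intro pd_invertible pd_F) (use s a in simp)
  have a2: "a^2 \<noteq> 0" using a by simp
  have mi: "matrix_inv (Fmat H (a *\<^sub>R V) s k) = (1 / a^2) *\<^sub>R matrix_inv (Fmat H V (s / a^2) k)"
    by (simp add: F_scale[OF a] matrix_inv_scaleR[OF inv a2])
  have sc: "a * a / a^2 = 1" using a by (simp add: power2_eq_square)
  show ?thesis
    unfolding rate_alt mi
    by (simp add: hadj_scaleR matrix_scalar_ac scalar_matrix_assoc[symmetric] sc)
qed



definition mdiff :: "('x::real_normed_vector \<Rightarrow> complex^'b^'a) \<Rightarrow> 'x \<Rightarrow> bool" where
  "mdiff M x0 \<longleftrightarrow> (\<forall>i j. (\<lambda>x. M x $ i $ j) differentiable (at x0))"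

lemma md_const: "mdiff (\<lambda>x. C) x0"
  by (simp add: mdiff_def)

lemma md_add: "mdiff A x0 \<Longrightarrow> mdiff B x0 \<Longrightarrow> mdiff (\<lambda>x. A x + B x) x0"
  by (simp add: mdiff_def differentiable_add)

lemma md_mult: "mdiff A x0 \<Longrightarrow> mdiff B x0 \<Longrightarrow> mdiff (\<lambda>x. A x ** B x) x0"
  unfolding mdiff_def matrix_matrix_mult_def
  by (auto intro!: differentiable_sum differentiable_mult)

lemma md_hadj: "mdiff A x0 \<Longrightarrow> mdiff (\<lambda>x. hadj (A x)) x0"
  unfolding mdiff_def hadj_def by (simp add: differentiable_cnj_iff)

lemma md_sum: "(\<And>j. j \<in> S \<Longrightarrow> mdiff (A j) x0) \<Longrightarrow> mdiff (\<lambda>x. \<Sum>j\<in>S. A j x) x0"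
  unfolding mdiff_def
  by (induction S rule: infinite_finite_induct) (auto intro!: differentiable_add)

lemma md_nth:
  fixes W0 :: "complex^'d^'m^'k"
  shows "mdiff (\<lambda>W. W $ k) W0"
proof -
  have "bounded_linear (\<lambda>W::complex^'d^'m^'k. W $ k $ i $ j)" for i j
    by (rule bounded_linear_compose[OF bounded_linear_vec_nth[of j]], rule bounded_linear_compose[OF bounded_linear_vec_nth[of i]], rule bounded_linear_vec_nth)
  then show ?thesis unfolding mdiff_def by (simp add: bounded_linear_imp_differentiable)
qed

lemma differentiable_prod':
  fixes f :: "'i \<Rightarrow> 'a::real_normed_vector \<Rightarrow> 'b::real_normed_field"
  assumes "\<And>i. i \<in> I \<Longrightarrow> f i differentiable (at x)"
  shows "(\<lambda>x. \<Prod>i\<in>I. f i x) differentiable (at x)"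
proof -
  from assms obtain D where "\<And>i. i \<in> I \<Longrightarrow> (f i has_derivative D i) (at x)"
    unfolding differentiable_def by metis
  then show ?thesis unfolding differentiable_def by (blast intro: has_derivative_prod)
qed

lemma det_diff: "mdiff M x0 \<Longrightarrow> (\<lambda>x. det (M x)) differentiable (at x0)"
  unfolding det_def mdiff_def
  by (intro differentiable_sum ballI differentiable_mult differentiable_const differentiable_prod') auto

lemma inv_cramer:
  fixes A :: "complex^'n^'n"
  assumes "det A \<noteq> 0"
  shows "matrix_inv A $ i $ j = det (\<chi> a b. if b = i then axis j 1 $ a else A$a$b) / det A"
proof -
  have inv: "invertible A" using assms invertible_det_nz by blast
  have "A *v (matrix_inv A *v axis j 1) = axis j 1"
    by (simp add: matrix_vector_mul_assoc matrix_inv_works[OF inv])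
  then have "matrix_inv A *v axis j 1 = (\<chi> k. det (\<chi> a b. if b = k then axis j 1 $ a else A$a$b) / det A)"
    using cramer[OF assms] by blast
  then have "(matrix_inv A *v axis j 1) $ i = det (\<chi> a b. if b = i then axis j 1 $ a else A$a$b) / det A"
    by simp
  moreover have "(matrix_inv A *v axis j 1) $ i = matrix_inv A $ i $ j"
    by (simp add: matrix_vector_mult_def axis_def if_distrib if_distribR sum.delta cong: if_cong)
  ultimately show ?thesis by simp
qed

lemma md_inv:
  assumes nz: "\<And>x. det (M x) \<noteq> 0" and md: "mdiff M x0"
  shows "mdiff (\<lambda>x. matrix_inv (M x)) x0"
  unfolding mdiff_def
proof (intro allI)
  fix i j
  have e: "(\<lambda>x. matrix_inv (M x) $ i $ j) = (\<lambda>x. det (\<chi> a b. if b = i then axis j 1 $ a else M x$a$b) / det (M x))"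
    using inv_cramer[OF nz] by auto
  have "mdiff (\<lambda>x. (\<chi> a b. if b = i then axis j 1 $ a else M x$a$b)) x0"
    unfolding mdiff_def
  proof (intro allI)
    fix a b
    show "(\<lambda>x. (\<chi> a b. if b = i then axis j 1 $ a else M x$a$b) $ a $ b) differentiable (at x0)"
      using md unfolding mdiff_def by (cases "b = i") simp_all
  qed
  then show "(\<lambda>x. matrix_inv (M x) $ i $ j) differentiable (at x0)"
    unfolding e using nz det_diff md by (intro differentiable_divide) auto
qed

lemma md_F: "mdiff (\<lambda>W. Fmat H W s k) W0"
  unfolding Fmat_def
  by (intro md_add md_const md_sum md_mult md_hadj md_nth)

lemma rate_diff:
  fixes W0 :: "complex^'d^'m^'k" and H :: "'k \<Rightarrow> complex^'m^'n"
  assumes s: "0 < s"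
  shows "(\<lambda>W. rate H W s k) differentiable (at W0)"
proof -
  define M where "M W = mat 1 + hadj (W $ k) ** hadj (H k) ** matrix_inv (Fmat H W s k) ** H k ** W $ k" for W :: "complex^'d^'m^'k"
  have md: "mdiff M W0" unfolding M_def
    by (intro md_add md_const md_mult md_hadj md_nth md_inv md_F pd_det pd_F s)
  have d1: "(\<lambda>W. Re (det (M W))) differentiable (at W0)"
    using differentiable_compose[OF bounded_linear_imp_differentiable[OF bounded_linear_Re] det_diff[OF md]]
    by simp
  obtain r where r: "r \<ge> 1" "det (M W0) = complex_of_real r"
    using det_rate[OF s, of W0 k H] unfolding M_def by blast
  have pos: "0 < Re (det (M W0))" using r by simp
  from d1 obtain D where "((\<lambda>W. Re (det (M W))) has_derivative D) (at W0)"
    unfolding differentiable_def by blast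
  from DERIV_compose_FDERIV[OF DERIV_ln[OF pos] this]
  have "(\<lambda>W. ln (Re (det (M W)))) differentiable (at W0)"
    unfolding differentiable_def by blast
  then show ?thesis by (simp add: rate_def M_def)
qed



lemma tp_scale: "total_power (a *\<^sub>R W) = a^2 * total_power W"
  unfolding total_power_def frob_sq_def
  by (simp add: sum_distrib_left power_mult_distrib)

lemma tp_nonneg: "0 \<le> total_power W"
  unfolding total_power_def frob_sq_def by (simp add: sum_nonneg)

lemma tp_diff:
  fixes W0 :: "complex^'d^'m^'k"
  shows "total_power differentiable (at W0)"
proof -
  have bl: "bounded_linear (\<lambda>W::complex^'d^'m^'k. W $ k $ i $ j)" for k i j
    by (rule bounded_linear_compose[OF bounded_linear_vec_nth[of j]], rule bounded_linear_compose[OF bounded_linear_vec_nth[of i]], rule bounded_linear_vec_nth)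
  have e: "(\<lambda>W::complex^'d^'m^'k. (cmod (W $ k $ i $ j))^2) = (\<lambda>W. (Re (W $ k $ i $ j))^2 + (Im (W $ k $ i $ j))^2)" for k i j
    by (simp add: cmod_power2)
  have d: "(\<lambda>W::complex^'d^'m^'k. (cmod (W $ k $ i $ j))^2) differentiable (at W0)" for k i j
    unfolding e
    using bounded_linear_imp_differentiable[OF bounded_linear_compose[OF bounded_linear_Re bl[of k i j]]]
          bounded_linear_imp_differentiable[OF bounded_linear_compose[OF bounded_linear_Im bl[of k i j]]]
    by (intro differentiable_add differentiable_power) auto
  have "(\<lambda>W::complex^'d^'m^'k. \<Sum>k\<in>UNIV. \<Sum>i\<in>UNIV. \<Sum>j\<in>UNIV. (cmod (W $ k $ i $ j))^2) differentiable (at W0)"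
    by (intro differentiable_sum ballI d) auto
  then show ?thesis unfolding total_power_def frob_sq_def by (simp add: o_def)
qed

lemma tp_cont: "continuous_on UNIV (total_power :: complex^'d^'m^'k \<Rightarrow> real)"
  by (intro continuous_at_imp_continuous_on ballI differentiable_imp_continuous_within tp_diff)

lemma f_diff:
  fixes x0 :: "complex^'d^'m^'k" and H :: "'k \<Rightarrow> complex^'m^'n"
  assumes "0 < s"
  shows "f_obj \<omega> H s differentiable (at x0)"
proof -
  have "(\<lambda>W. \<Sum>k\<in>UNIV. \<omega> k * rate H W s k) differentiable (at x0)"
    by (intro differentiable_sum ballI differentiable_mult differentiable_const rate_diff assms) auto
  then show ?thesis unfolding f_obj_def[abs_def] by simp
qed

lemma g_eq_f:
  fixes W :: "complex^'d^'m^'k"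
  assumes "0 < \<sigma>2" "0 < P" "0 < total_power W"
  shows "g_obj \<omega> H \<sigma>2 P W = f_obj \<omega> H \<sigma>2 (sqrt (P / total_power W) *\<^sub>R W)"
proof -
  define a where "a = sqrt (P / total_power W)"
  have a0: "a \<noteq> 0" using assms by (simp add: a_def)
  have a2: "a^2 = P / total_power W" using assms by (simp add: a_def)
  have "\<sigma>2 / a^2 = \<sigma>2 / P * total_power W" using assms by (simp add: a2)
  then show ?thesis unfolding g_obj_def f_obj_def a_def[symmetric]
    by (simp add: rate_scale[OF a0 assms(1)])
qed

lemma f_ray_mono:
  fixes x0 :: "complex^'d^'m^'k"
  assumes w: "\<forall>k. \<omega> k > 0" and s: "0 < \<sigma>2" and u: "1 \<le> u"
  shows "f_obj \<omega> H \<sigma>2 x0 \<le> f_obj \<omega> H \<sigma>2 (u *\<^sub>R x0)"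
proof -
  have u0: "u \<noteq> 0" using u by simp
  have le: "\<sigma>2 / u^2 \<le> \<sigma>2" using s u
    by (simp add: divide_le_eq power_one_right)
  have pos: "0 < \<sigma>2 / u^2" using s u0 by simp
  show ?thesis unfolding f_obj_def
  proof (rule sum_mono)
    fix k
    have "rate H x0 \<sigma>2 k \<le> rate H x0 (\<sigma>2 / u^2) k" by (rule rate_mono[OF pos le])
    then show "\<omega> k * rate H x0 \<sigma>2 k \<le> \<omega> k * rate H (u *\<^sub>R x0) \<sigma>2 k"
      using w by (simp add: rate_scale[OF u0 s] less_imp_le)
  qed
qed



theorem theorem1:
  fixes \<omega> :: "'k::finite \<Rightarrow> real"
    and H :: "'k \<Rightarrow> complex^'m::finite^'n::finite"
    and \<sigma>2 P :: real
    and V :: "complex^'d::finite^'m^'k"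
  assumes "\<forall>k. \<omega> k > 0" and "\<sigma>2 > 0" and "P > 0" and "total_power V > 0"
  shows "stationary_point (g_obj \<omega> H \<sigma>2 P) V \<longleftrightarrow>
         kkt_point (f_obj \<omega> H \<sigma>2) (\<lambda>W. total_power W - P)
           (sqrt (P / total_power V) *\<^sub>R V)"
proof -
  note w = assms(1) and s = assms(2) and P = assms(3) and t = assms(4)
  define \<rho> where "\<rho> = sqrt (P / total_power V)"
  define x0 where "x0 = \<rho> *\<^sub>R V"
  define \<phi> where "\<phi> W = sqrt (P / total_power W) *\<^sub>R W" for W :: "complex^'d^'m^'k"
  define S where "S = {W :: complex^'d^'m^'k. 0 < total_power W}"
  have \<rho>0: "0 < \<rho>" using P t by (simp add: \<rho>_def)
  have \<rho>2: "\<rho>^2 = P / total_power V" using P t by (simp add: \<rho>_def)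
  have tpx0: "total_power x0 = P" using t by (simp add: x0_def tp_scale \<rho>2)
  have openS: "open S" unfolding S_def using open_Collect_less[OF continuous_on_const[of UNIV "0::real"] tp_cont] by simp
  have VS: "V \<in> S" using t by (simp add: S_def)
  have \<phi>V: "\<phi> V = x0" by (simp add: \<phi>_def x0_def \<rho>_def)
  have gf: "f_obj \<omega> H \<sigma>2 (\<phi> W) = g_obj \<omega> H \<sigma>2 P W" if "W \<in> S" for W
    using g_eq_f[OF s P, of W \<omega> H] that by (simp add: S_def \<phi>_def)
  have tp\<phi>: "P = total_power (\<phi> W)" if "W \<in> S" for W
    using that P by (simp add: S_def \<phi>_def tp_scale)
  have "(\<lambda>W. P / total_power W) differentiable (at V)"
    using t by (intro differentiable_divide differentiable_const tp_diff) auto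
  then obtain Dq where Dq: "((\<lambda>W. P / total_power W) has_derivative Dq) (at V)"
    unfolding differentiable_def by blast
  define Dr where "Dr h = Dq h * (inverse (sqrt (P / total_power V)) / 2)" for h
  have Dr: "((\<lambda>W. sqrt (P / total_power W)) has_derivative Dr) (at V)"
    using DERIV_compose_FDERIV[OF DERIV_real_sqrt Dq] P t unfolding Dr_def by simp
  define Dphi where "Dphi h = \<rho> *\<^sub>R h + Dr h *\<^sub>R V" for h
  have Dphi: "(\<phi> has_derivative Dphi) (at V)"
    using has_derivative_scaleR[OF Dr has_derivative_ident]
    unfolding \<phi>_def[abs_def] Dphi_def[abs_def] \<rho>_def by simp
  obtain Dt0 where Dt0: "(total_power has_derivative Dt0) (at x0)"
    using tp_diff unfolding differentiable_def by blast
  have lin0: "linear Dt0" by (rule has_derivative_linear[OF Dt0])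
  have comp0: "Dt0 (Dphi h) = 0" for h
  proof -
    have "((\<lambda>W. total_power (\<phi> W)) has_derivative (\<lambda>h. Dt0 (Dphi h))) (at V)"
      using has_derivative_compose[OF Dphi, of total_power Dt0] \<phi>V Dt0 by simp
    moreover have "((\<lambda>W. total_power (\<phi> W)) has_derivative (\<lambda>h. 0)) (at V)"
      by (rule has_derivative_transform_within_open[OF has_derivative_const[of P] openS VS]) (use tp\<phi> in simp)
    ultimately have "(\<lambda>h. Dt0 (Dphi h)) = (\<lambda>h. 0)" by (rule has_derivative_unique)
    then show ?thesis by (metis)
  qed
  have Dt0x0: "Dt0 x0 = 2 * P"
  proof -
    have sl: "((\<lambda>u::real. u *\<^sub>R x0) has_derivative (\<lambda>d. d *\<^sub>R x0)) (at 1)"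
      by (rule bounded_linear.has_derivative[OF bounded_linear_scaleR_left has_derivative_ident])
    have h1: "((\<lambda>u::real. total_power (u *\<^sub>R x0)) has_derivative (\<lambda>d. Dt0 (d *\<^sub>R x0))) (at 1)"
      using has_derivative_compose[OF sl, of total_power Dt0] Dt0 by simp
    have e: "(\<lambda>u::real. total_power (u *\<^sub>R x0)) = (\<lambda>u. u^2 * P)"
      by (simp add: tp_scale tpx0)
    have "((\<lambda>u::real. u^2 * P) has_real_derivative 2 * P) (at 1)"
      by (auto intro!: derivative_eq_intros)
    then have h2: "((\<lambda>u::real. total_power (u *\<^sub>R x0)) has_derivative (*) (2 * P)) (at 1)"
      unfolding e has_field_derivative_def .
    have "(\<lambda>d. Dt0 (d *\<^sub>R x0)) = (*) (2 * P)" using has_derivative_unique[OF h1 h2] .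
    then have "Dt0 (1 *\<^sub>R x0) = 2 * P * 1" by (rule fun_cong)
    then show ?thesis by simp
  qed
  have Dt0V: "Dt0 V = 2 * P / \<rho>"
  proof -
    have "V = (1 / \<rho>) *\<^sub>R x0" using \<rho>0 by (simp add: x0_def)
    then have "Dt0 V = (1 / \<rho>) * Dt0 x0" using linear_scale[OF lin0] by (metis real_scaleR_def)
    then show ?thesis by (simp add: Dt0x0)
  qed
  have key: "Df u = 0" if z: "\<And>h. Df (Dphi h) = 0" and u: "Dt0 u = 0" for Df u
  proof -
    define h where "h = (1 / \<rho>) *\<^sub>R u"
    have dph: "Dphi h = u + Dr h *\<^sub>R V" using \<rho>0 by (simp add: Dphi_def h_def)
    have "0 = Dt0 (Dphi h)" using comp0 by simp
    also have "\<dots> = Dt0 u + Dr h * Dt0 V" unfolding dph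
      using linear_add[OF lin0] linear_scale[OF lin0] by (metis real_scaleR_def)
    finally have "Dr h * (2 * P / \<rho>) = 0" using u Dt0V by simp
    then have "Dr h = 0" using P \<rho>0 by simp
    then have "Dphi h = u" by (simp add: dph)
    then show ?thesis using z by metis
  qed
  have gder: "(g_obj \<omega> H \<sigma>2 P has_derivative (\<lambda>h. Df (Dphi h))) (at V)"
    if Df: "(f_obj \<omega> H \<sigma>2 has_derivative Df) (at x0)" for Df
  proof -
    have "((\<lambda>W. f_obj \<omega> H \<sigma>2 (\<phi> W)) has_derivative (\<lambda>h. Df (Dphi h))) (at V)"
      using has_derivative_compose[OF Dphi, of "f_obj \<omega> H \<sigma>2" Df] \<phi>V Df by simp
    then show ?thesis
      by (rule has_derivative_transform_within_open[OF _ openS VS]) (use gf in simp)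
  qed
  have cder: "((\<lambda>W. total_power W - P) has_derivative Dt0) (at x0)"
    using has_derivative_diff[OF Dt0 has_derivative_const[of P]] by simp
  have x0e: "sqrt (P / total_power V) *\<^sub>R V = x0" by (simp add: x0_def \<rho>_def)
  show ?thesis
    unfolding x0e
  proof
    assume "stationary_point (g_obj \<omega> H \<sigma>2 P) V"
    then have g0: "(g_obj \<omega> H \<sigma>2 P has_derivative (\<lambda>h. 0)) (at V)"
      by (simp add: stationary_point_def)
    obtain Df where Df: "(f_obj \<omega> H \<sigma>2 has_derivative Df) (at x0)"
      using f_diff[OF s] unfolding differentiable_def by blast
    have linDf: "linear Df" by (rule has_derivative_linear[OF Df])
    have "(\<lambda>h. Df (Dphi h)) = (\<lambda>h. 0)" using has_derivative_unique[OF gder[OF Df] g0] .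
    then have z: "Df (Dphi h) = 0" for h by metis
    define \<mu> where "\<mu> = Df x0 / (2 * P)"
    have decomp: "Df h - \<mu> * Dt0 h = 0" for h
    proof -
      define \<alpha> where "\<alpha> = Dt0 h / (2 * P)"
      define u where "u = h - \<alpha> *\<^sub>R x0"
      have "Dt0 u = Dt0 h - \<alpha> * Dt0 x0"
        unfolding u_def using linear_diff[OF lin0] linear_scale[OF lin0] by (metis real_scaleR_def)
      then have "Dt0 u = 0" using P by (simp add: Dt0x0 \<alpha>_def)
      then have "Df u = 0" using key z by blast
      moreover have "Df u = Df h - \<alpha> * Df x0"
        unfolding u_def using linear_diff[OF linDf] linear_scale[OF linDf] by (metis real_scaleR_def)
      ultimately have "Df h = \<alpha> * Df x0" by simp
      then show ?thesis using P by (simp add: \<mu>_def \<alpha>_def field_simps)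
    qed
    have "0 \<le> Df x0"
    proof (rule ccontr)
      assume neg: "\<not> 0 \<le> Df x0"
      have sl: "((\<lambda>u::real. u *\<^sub>R x0) has_derivative (\<lambda>d. d *\<^sub>R x0)) (at 1)"
        by (rule bounded_linear.has_derivative[OF bounded_linear_scaleR_left has_derivative_ident])
      have "((\<lambda>u::real. f_obj \<omega> H \<sigma>2 (u *\<^sub>R x0)) has_derivative (\<lambda>d. Df (d *\<^sub>R x0))) (at 1)"
        using has_derivative_compose[OF sl, of "f_obj \<omega> H \<sigma>2" Df] Df by simp
      moreover have "(\<lambda>d. Df (d *\<^sub>R x0)) = (*) (Df x0)"
        using linear_scale[OF linDf] by (auto simp: mult.commute)
      ultimately have "((\<lambda>u::real. f_obj \<omega> H \<sigma>2 (u *\<^sub>R x0)) has_real_derivative Df x0) (at 1)"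
        unfolding has_field_derivative_def by simp
      from DERIV_neg_dec_right[OF this] neg obtain d where d: "d > 0"
        and dd: "\<forall>h>0. h < d \<longrightarrow> f_obj \<omega> H \<sigma>2 (1 *\<^sub>R x0) > f_obj \<omega> H \<sigma>2 ((1 + h) *\<^sub>R x0)"
        by force
      have "f_obj \<omega> H \<sigma>2 x0 > f_obj \<omega> H \<sigma>2 ((1 + d/2) *\<^sub>R x0)" using dd d by simp
      moreover have "f_obj \<omega> H \<sigma>2 x0 \<le> f_obj \<omega> H \<sigma>2 ((1 + d/2) *\<^sub>R x0)"
        by (rule f_ray_mono[OF w s]) (use d in simp)
      ultimately show False by simp
    qed
    then have \<mu>0: "0 \<le> \<mu>" using P by (simp add: \<mu>_def)
    show "kkt_point (f_obj \<omega> H \<sigma>2) (\<lambda>W. total_power W - P) x0"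
      unfolding kkt_point_def
      using \<mu>0 Df cder decomp tpx0 by auto
  next
    assume "kkt_point (f_obj \<omega> H \<sigma>2) (\<lambda>W. total_power W - P) x0"
    then obtain \<mu> Df Dc where Df: "(f_obj \<omega> H \<sigma>2 has_derivative Df) (at x0)"
      and Dc: "((\<lambda>W. total_power W - P) has_derivative Dc) (at x0)"
      and e: "\<forall>h. Df h - \<mu> * Dc h = 0"
      unfolding kkt_point_def by blast
    have "Dc = Dt0" using has_derivative_unique[OF Dc cder] .
    then have "Df (Dphi h) = 0" for h using e comp0 by (metis mult_zero_right right_minus_eq)
    then have "(\<lambda>h. Df (Dphi h)) = (\<lambda>h. 0)" by simp
    then show "stationary_point (g_obj \<omega> H \<sigma>2 P) V"
      unfolding stationary_point_def using gder[OF Df] by simp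
  qed
qed

end
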